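(* Let $n\ge1$, $k\in\{1,\ldots,n\}$, and let $f\in L^2([0,1]^n)$ be such that the derivative $D_{(k)}f$ of $f$ in the direction $(k)$ exists and is continuous and integrable on $\bigcup_{\pi\in S_n}[0,1]^n_\pi$. Then $$I(f,k)=\int_{[0,1]^n}h_k(\mathbf{x})\,D_{(k)}f(\mathbf{x})\,d\mathbf{x},$$ where $h_k(\mathbf{x})=(n+1)(n+2)\,(x_{(k+1)}-x_{(k)})(x_{(k)}-x_{(k-1)})$.
   Context: $L^2([0,1]^n)$ is the space of square integrable real functions on $[0,1]^n$ modulo equality almost everywhere. For $\mathbf{x}\in[0,1]^n$, $x_{(1)}\le\cdots\le x_{(n)}$ are its coordinates in ascending order, with $x_{(0)}=0$, $x_{(n+1)}=1$. The influence index is $I(f,k)=-(n+1)(n+2)\int_{[0,1]^n}f(\mathbf{x})\,\big(x_{(k+1)}-2x_{(k)}+x_{(k-1)}\big)\,d\mathbf{x}$. $S_n$ is the symmetric group on $\{1,\ldots,n\}$ and, for $\pi\in S_n$, $[0,1]^n_\pi=\{\mathbf{x}\in[0,1]^n: x_{\pi(1)}<\cdots<x_{\pi(n)}\}$. If for every $\pi\in S_n$ the partial derivative $D_{\pi(k)}(f|_{[0,1]^n_\pi})$ exists, the derivative of $f$ in the direction $(k)$ is the function $D_{(k)}f$ on $\bigcup_{\pi}[0,1]^n_\pi$ given by $D_{(k)}f(\mathbf{x})=D_{\pi(k)}f(\mathbf{x})$ for $\mathbf{x}\in[0,1]^n_\pi$. *)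

theory Defs
  imports "HOL-Analysis.Analysis" "HOL-Library.Multiset"
begin

text \<open>Points of [0,1]^n are vectors of type real^'n, with n = CARD('n).\<close>

definition unit_cube :: "(real^'n::finite) set" where
  "unit_cube = cbox 0 One"

definition ord_stat :: "real^'n::finite \<Rightarrow> nat \<Rightarrow> real" where
  "ord_stat x j =
     (if j = 0 then 0
      else if j > CARD('n) then 1
      else sorted_list_of_multiset (image_mset (\<lambda>i. x $ i) (mset_set UNIV)) ! (j - 1))"

definition influence :: "(real^'n::finite \<Rightarrow> real) \<Rightarrow> nat \<Rightarrow> real" where
  "influence f k =
     - (real CARD('n) + 1) * (real CARD('n) + 2) *
       integral unit_cube (\<lambda>x. f x * (ord_stat x (k + 1) - 2 * ord_stat x k + ord_stat x (k - 1)))"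

definition perms :: "(nat \<Rightarrow> 'n::finite) set" where
  "perms = {\<pi>. bij_betw \<pi> {1..CARD('n)} UNIV}"

definition perm_region :: "(nat \<Rightarrow> 'n::finite) \<Rightarrow> (real^'n) set" where
  "perm_region \<pi> = {x \<in> unit_cube.
      \<forall>i j. 1 \<le> i \<longrightarrow> i < j \<longrightarrow> j \<le> CARD('n) \<longrightarrow> x $ (\<pi> i) < x $ (\<pi> j)}"

definition union_regions :: "(real^'n::finite) set" where
  "union_regions = (\<Union>\<pi>\<in>perms. perm_region \<pi>)"

definition has_partial_within ::
    "(real^'n::finite \<Rightarrow> real) \<Rightarrow> (real^'n) set \<Rightarrow> 'n \<Rightarrow> real^'n \<Rightarrow> real \<Rightarrow> bool" where
  "has_partial_within f S i x d \<longleftrightarrow>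
     ((\<lambda>t. f (x + t *\<^sub>R axis i 1)) has_real_derivative d)
       (at 0 within {t. x + t *\<^sub>R axis i 1 \<in> S})"

definition dir_deriv_exists :: "(real^'n::finite \<Rightarrow> real) \<Rightarrow> nat \<Rightarrow> bool" where
  "dir_deriv_exists f k \<longleftrightarrow>
     (\<forall>\<pi>\<in>perms. \<forall>x\<in>perm_region \<pi>. \<exists>d. has_partial_within f (perm_region \<pi>) (\<pi> k) x d)"

definition dir_deriv :: "(real^'n::finite \<Rightarrow> real) \<Rightarrow> nat \<Rightarrow> real^'n \<Rightarrow> real" where
  "dir_deriv f k x =
     (THE d. \<exists>\<pi>\<in>perms. x \<in> perm_region \<pi> \<and> has_partial_within f (perm_region \<pi>) (\<pi> k) x d)"

definition h_weight :: "nat \<Rightarrow> real^'n::finite \<Rightarrow> real" where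
  "h_weight k x = (real CARD('n) + 1) * (real CARD('n) + 2) *
     (ord_stat x (k + 1) - ord_stat x k) * (ord_stat x k - ord_stat x (k - 1))"

end

theory Submission
  imports Defs
begin


lemma prod_Basis_cart: "(\<Prod>b\<in>(Basis::(real^'n) set). g b) = (\<Prod>i\<in>UNIV. g (axis i 1))"
proof -
  have "(Basis::(real^'n) set) = range (\<lambda>i. axis i 1)"
    by (auto simp: Basis_vec_def)
  moreover have "inj (\<lambda>i::'n. axis i (1::real))"
    by (auto intro!: injI simp: axis_eq_axis)
  ultimately show ?thesis using prod.reindex[of "\<lambda>i::'n. axis i (1::real)" UNIV g] by simp
qed

lemma emeasure_lborel_box_cart:
  fixes l u :: "real^'n"
  assumes "\<And>i. l$i \<le> u$i"
  shows "emeasure lborel (box l u) = (\<Prod>i\<in>UNIV. u$i - l$i)"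
proof -
  have "\<And>b. b \<in> Basis \<Longrightarrow> l \<bullet> b \<le> u \<bullet> b"
    using assms by (auto simp: Basis_vec_def inner_axis)
  then show ?thesis
    by (simp add: prod_Basis_cart inner_axis inner_diff_left)
qed



definition upd :: "real^'n \<Rightarrow> 'n \<Rightarrow> real \<Rightarrow> real^'n" where
  "upd x j t = (\<chi> i. if i = j then t else x$i)"

lemma upd_nth[simp]: "upd x j t $ i = (if i = j then t else x$i)"
  by (simp add: upd_def)

lemma upd_upd[simp]: "upd (upd x j s) j t = upd x j t"
  by (simp add: upd_def vec_eq_iff)

lemma continuous_upd: "continuous_on UNIV (\<lambda>p::(real^'n) \<times> real. upd (fst p) j (snd p))"
  unfolding upd_def
proof (intro continuous_on_vec_lambda)
  fix i show "continuous_on UNIV (\<lambda>p::(real^'n) \<times> real. if i = j then snd p else fst p $ i)"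
    by (cases "i = j") (auto intro!: continuous_intros)
qed

lemma upd_borel[measurable]: "(\<lambda>p::(real^'n) \<times> real. upd (fst p) j (snd p)) \<in> borel_measurable borel"
  by (rule borel_measurable_continuous_onI[OF continuous_upd])

definition Sj :: "'n \<Rightarrow> (real^'n) set" where
  "Sj j = {x. 0 < x$j \<and> x$j < 1}"

lemma sum_Basis_cart_nth[simp]: "(\<Sum>b\<in>(Basis::(real^'n) set). b $ i) = 1"
proof -
  have B: "(Basis::(real^'n) set) = range (\<lambda>i. axis i 1)"
    by (auto simp: Basis_vec_def)
  have inj: "inj (\<lambda>i::'n. axis i (1::real))"
    by (auto intro!: injI simp: axis_eq_axis)
  have "(\<Sum>b\<in>(Basis::(real^'n) set). b $ i) = (\<Sum>k\<in>UNIV. axis k (1::real) $ i)"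
    unfolding B using sum.reindex[OF inj, of "\<lambda>b. b $ i"] by simp
  also have "\<dots> = 1" by (simp add: axis_def)
  finally show ?thesis .
qed

lemma One_cart_nth: "(One::real^'n) $ i = 1"
  by simp

lemma vec_nth_borel[measurable]: "(\<lambda>x::real^'n. x$j) \<in> borel_measurable borel"
  by (intro borel_measurable_continuous_onI continuous_intros)

lemma Sj_borel[measurable]: "Sj j \<in> sets borel"
  unfolding Sj_def by measurable

definition NN :: "'n \<Rightarrow> (real^'n) measure" where
  "NN j = distr (density lborel (indicator (Sj j))) borel (\<lambda>x. upd x j 0)"

lemma upd0_borel[measurable]: "(\<lambda>x::real^'n. upd x j (t::real)) \<in> borel_measurable borel"
proof -
  have "continuous_on UNIV (\<lambda>x::real^'n. upd x j t)"
    unfolding upd_def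
  proof (intro continuous_on_vec_lambda)
    fix i show "continuous_on UNIV (\<lambda>x::real^'n. if i = j then t else x $ i)"
      by (cases "i = j") (auto intro!: continuous_intros)
  qed
  then show ?thesis by (rule borel_measurable_continuous_onI)
qed

lemma sets_NN[simp]: "sets (NN j) = sets borel" and space_NN[simp]: "space (NN j) = UNIV"
  by (simp_all add: NN_def)

lemma emeasure_NN:
  assumes "A \<in> sets borel"
  shows "emeasure (NN j) A = emeasure lborel (Sj j \<inter> {x. upd x j 0 \<in> A})"
proof -
  have m: "{x. upd x j 0 \<in> A} \<in> sets borel" using assms by measurable
  have "emeasure (NN j) A = emeasure (density lborel (indicator (Sj j))) ((\<lambda>x. upd x j 0) -` A)"
    unfolding NN_def using assms by (simp add: emeasure_distr)
  also have "\<dots> = (\<integral>\<^sup>+ x. indicator (Sj j) x * indicator ((\<lambda>x. upd x j 0) -` A) x \<partial>lborel)"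
    using m by (subst emeasure_density) (auto simp: vimage_def nn_integral_set_ennreal)
  also have "\<dots> = (\<integral>\<^sup>+ x. indicator (Sj j \<inter> {x. upd x j 0 \<in> A}) x \<partial>lborel)"
    by (intro nn_integral_cong) (auto split: split_indicator)
  also have "\<dots> = emeasure lborel (Sj j \<inter> {x. upd x j 0 \<in> A})"
    using m by (intro nn_integral_indicator) auto
  finally show ?thesis .
qed

lemma sigma_finite_NN: "sigma_finite_measure (NN (j::'n::finite))"
proof
  let ?A = "range (\<lambda>m::nat. box (- (real m) *\<^sub>R One) ((real m) *\<^sub>R (One::real^'n)))"
  show "\<exists>A. countable A \<and> A \<subseteq> sets (NN j) \<and> \<Union> A = space (NN j) \<and> (\<forall>a\<in>A. emeasure (NN j) a \<noteq> \<infinity>)"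
  proof (intro exI[of _ ?A] conjI ballI)
    show "countable ?A" by simp
    show "?A \<subseteq> sets (NN j)" by auto
    show "\<Union> ?A = space (NN j)"
      using UN_box_eq_UNIV[where 'a="real^'n"] by auto
    fix a assume "a \<in> ?A"
    then obtain m where a: "a = box (- (real m) *\<^sub>R One) ((real m) *\<^sub>R (One::real^'n))" by auto
    let ?b = "box (- (real m + 1) *\<^sub>R One) ((real m + 1) *\<^sub>R (One::real^'n))"
    have "Sj j \<inter> {x. upd x j 0 \<in> a} \<subseteq> ?b"
    proof
      fix x assume x: "x \<in> Sj j \<inter> {x. upd x j 0 \<in> a}"
      show "x \<in> ?b" unfolding mem_box_cart
      proof
        fix i show "(- (real m + 1) *\<^sub>R One) $ i < x $ i \<and> x $ i < ((real m + 1) *\<^sub>R (One::real^'n)) $ i"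
          using x by (cases "i = j") (auto simp: a Sj_def mem_box_cart dest!: spec[of _ i])
      qed
    qed
    then have "emeasure lborel (Sj j \<inter> {x. upd x j 0 \<in> a}) \<le> emeasure lborel ?b"
      by (intro emeasure_mono) auto
    also have "\<dots> < \<infinity>" by (simp add: emeasure_lborel_box_finite)
    finally show "emeasure (NN j) a \<noteq> \<infinity>"
      by (subst emeasure_NN) (auto simp: a)
  qed
qed



lemma sets_NN_pair: "sets (NN (j::'n::finite) \<Otimes>\<^sub>M lborel) = sets (borel :: ((real^'n) \<times> real) measure)"
proof -
  have "sets (NN j \<Otimes>\<^sub>M lborel) = sets ((borel :: (real^'n) measure) \<Otimes>\<^sub>M (borel :: real measure))"
    by (intro sets_pair_measure_cong) simp_all
  also have "\<dots> = sets borel" using borel_prod[where 'a="real^'n" and 'b=real] by (simp only:)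
  finally show ?thesis .
qed

lemma Phi_meas[measurable]: "(\<lambda>p. upd (fst p) j (snd p)) \<in> measurable (NN (j::'n::finite) \<Otimes>\<^sub>M lborel) borel"
  using upd_borel[of j] measurable_cong_sets[OF sets_NN_pair[of j, symmetric] refl] by blast

lemma lborel_split: "lborel = distr (NN (j::'n::finite) \<Otimes>\<^sub>M lborel) borel (\<lambda>p. upd (fst p) j (snd p))"
proof (rule lborel_eqI)
  interpret NNs: sigma_finite_measure "NN j" by (rule sigma_finite_NN)
  fix l u :: "real^'n"
  assume le: "\<And>b. b \<in> Basis \<Longrightarrow> l \<bullet> b \<le> u \<bullet> b"
  have lu: "l $ i \<le> u $ i" for i using le[of "axis i 1"] by (auto simp: Basis_vec_def inner_axis)
  define A where "A = (\<lambda>y. upd y j 0) -` box (upd l j (-1)) (upd u j 1)"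
  have A_borel: "A \<in> sets borel" unfolding A_def
    by (rule measurable_sets[OF upd0_borel[of j 0], simplified]) simp
  have pre: "(\<lambda>p. upd (fst p) j (snd p)) -` box l u \<inter> space (NN j \<Otimes>\<^sub>M lborel) = A \<times> {l$j <..< u$j}"
    by (auto simp: A_def mem_box_cart space_pair_measure split: if_splits)
  have "Sj j \<inter> {x. upd x j 0 \<in> A} = box (upd l j 0) (upd u j 1)"
    by (auto simp: A_def mem_box_cart Sj_def split: if_splits)
  then have eA: "emeasure (NN j) A = (\<Prod>i\<in>UNIV. if i = j then 1 else u$i - l$i)"
    using A_borel lu by (simp add: emeasure_NN emeasure_lborel_box_cart if_distrib cong: if_cong)
  have "emeasure (distr (NN j \<Otimes>\<^sub>M lborel) borel (\<lambda>p. upd (fst p) j (snd p))) (box l u)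
      = emeasure (NN j \<Otimes>\<^sub>M lborel) (A \<times> {l$j <..< u$j})"
    by (subst emeasure_distr) (auto simp: pre)
  also have "\<dots> = emeasure (NN j) A * emeasure lborel {l$j <..< u$j}"
    using A_borel by (intro lborel.emeasure_pair_measure_Times) auto
  also have "\<dots> = ennreal (\<Prod>i\<in>UNIV. if i = j then 1 else u$i - l$i) * ennreal (u$j - l$j)"
    using lu by (simp add: eA)
  also have "\<dots> = ennreal ((\<Prod>i\<in>UNIV. if i = j then 1 else u$i - l$i) * (u$j - l$j))"
    using lu by (intro ennreal_mult''[symmetric]) (auto intro!: prod_nonneg)
  also have "(\<Prod>i\<in>UNIV. if i = j then 1 else u$i - l$i) * (u$j - l$j) = (\<Prod>i\<in>UNIV. u$i - l$i)"
  proof -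
    have "(\<Prod>i\<in>UNIV. u$i - l$i) = (u$j - l$j) * (\<Prod>i\<in>UNIV - {j}. u$i - l$i)"
      by (simp add: prod.remove)
    moreover have "(\<Prod>i\<in>UNIV. if i = j then 1 else u$i - l$i) = 1 * (\<Prod>i\<in>UNIV - {j}. if i = j then 1 else u$i - l$i)"
      by (subst prod.remove[of UNIV j]) auto
    moreover have "(\<Prod>i\<in>UNIV - {j}. if i = j then 1 else u$i - l$i) = (\<Prod>i\<in>UNIV - {j}. u$i - l$i)"
      by (intro prod.cong) auto
    ultimately show ?thesis by simp
  qed
  also have "(\<Prod>i\<in>UNIV. u$i - l$i) = (\<Prod>b\<in>Basis. (u - l) \<bullet> b)"
    by (simp add: prod_Basis_cart inner_axis inner_diff_left)
  finally show "emeasure (distr (NN j \<Otimes>\<^sub>M lborel) borel (\<lambda>p. upd (fst p) j (snd p))) (box l u) = (\<Prod>b\<in>Basis. (u - l) \<bullet> b)" .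
qed simp



lemma upd_line_borel[measurable]: "upd (y::real^'n::finite) j \<in> borel_measurable borel"
proof -
  have "continuous_on UNIV (\<lambda>t. upd (y::real^'n) j t)"
    unfolding upd_def
  proof (intro continuous_on_vec_lambda)
    fix i show "continuous_on UNIV (\<lambda>t::real. if i = j then t else y $ i)"
      by (cases "i = j") (auto intro!: continuous_intros)
  qed
  then show ?thesis by (rule borel_measurable_continuous_onI)
qed

lemma line_fubini:
  fixes g :: "real^'n::finite \<Rightarrow> real" and j :: 'n and S :: "(real^'n) set"
  assumes gi: "g absolutely_integrable_on S"
  shows "\<exists>G. integrable (NN j) G \<and> integral S g = integral\<^sup>L (NN j) G \<and>
    (AE y in NN j. (\<lambda>t. g (upd y j t)) absolutely_integrable_on {t. upd y j t \<in> S} \<and>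
        G y = integral {t. upd y j t \<in> S} (\<lambda>t. g (upd y j t)))"
proof -
  interpret NNs: sigma_finite_measure "NN j" by (rule sigma_finite_NN)
  interpret P: pair_sigma_finite "NN j" lborel ..
  define gS where "gS = (\<lambda>x. indicator S x *\<^sub>R g x)"
  have gSi: "integrable lebesgue gS" using gi unfolding set_integrable_def gS_def .
  then have "gS \<in> borel_measurable lebesgue" by auto
  then obtain g0 where g0: "g0 \<in> borel_measurable lborel" and ae: "AE x in lborel. gS x = g0 x"
    using completion_ex_borel_measurable_real by blast
  have g0b[measurable]: "g0 \<in> borel_measurable borel" using g0 by simp
  have "integrable lebesgue g0"
    using gSi ae by (subst integrable_cong_AE[of g0 _ gS]) (auto intro: AE_completion measurable_completion g0 simp: eq_commute)
  then have g0i: "integrable lborel g0" using integrable_completion g0 by blast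
  have "integral S g = integral\<^sup>L lebesgue gS"
    using set_lebesgue_integral_eq_integral(2)[OF gi] by (simp add: set_lebesgue_integral_def gS_def)
  also have "\<dots> = integral\<^sup>L lebesgue g0"
    using ae by (intro integral_cong_AE) (auto intro: AE_completion measurable_completion g0 simp: gSi borel_measurable_integrable[OF gSi])
  also have "\<dots> = integral\<^sup>L lborel g0" using integral_completion g0 by blast
  finally have eq1: "integral S g = integral\<^sup>L lborel g0" .
  let ?Phi = "\<lambda>p. upd (fst p) j (snd p)"
  have Pi: "integrable (NN j \<Otimes>\<^sub>M lborel) (\<lambda>p. g0 (?Phi p))"
    using g0i by (subst (asm) lborel_split[of j]) (simp add: integrable_distr_eq)
  have Pint: "integral\<^sup>L lborel g0 = integral\<^sup>L (NN j \<Otimes>\<^sub>M lborel) (\<lambda>p. g0 (?Phi p))"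
    by (subst lborel_split[of j]) (simp add: integral_distr)
  define G where "G = (\<lambda>y. \<integral>t. g0 (upd y j t) \<partial>lborel)"
  have Pi': "integrable (NN j \<Otimes>\<^sub>M lborel) (case_prod (\<lambda>y t. g0 (upd y j t)))"
    using Pi by (simp add: case_prod_beta')
  have Gi: "integrable (NN j) G" unfolding G_def by (rule P.integrable_fst[OF Pi'])
  have GI: "integral\<^sup>L (NN j) G = integral\<^sup>L lborel g0"
    unfolding G_def Pint using P.integral_fst[OF Pi'] by (simp add: case_prod_beta')
  have ae1: "AE y in NN j. integrable lborel (\<lambda>t. g0 (upd y j t))"
    by (rule P.AE_integrable_fst[OF Pi'])
  obtain Z where Z: "Z \<in> null_sets lborel" "{x \<in> space lborel. \<not> gS x = g0 x} \<subseteq> Z"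
    using ae unfolding eventually_ae_filter by blast
  have "emeasure (NN j \<Otimes>\<^sub>M lborel) (?Phi -` Z \<inter> space (NN j \<Otimes>\<^sub>M lborel)) = emeasure lborel Z"
  proof -
    have "emeasure (distr (NN j \<Otimes>\<^sub>M lborel) borel ?Phi) Z = emeasure (NN j \<Otimes>\<^sub>M lborel) (?Phi -` Z \<inter> space (NN j \<Otimes>\<^sub>M lborel))"
      using Z by (intro emeasure_distr) auto
    then show ?thesis using lborel_split[of j] by simp
  qed
  moreover have "?Phi -` Z \<inter> space (NN j \<Otimes>\<^sub>M lborel) \<in> sets (NN j \<Otimes>\<^sub>M lborel)"
    using Z by (intro measurable_sets[OF Phi_meas]) auto
  ultimately have "AE p in NN j \<Otimes>\<^sub>M lborel. ?Phi p \<notin> Z"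
    using Z by (intro AE_I[where N="?Phi -` Z \<inter> space (NN j \<Otimes>\<^sub>M lborel)"]) auto
  then have ae2: "AE y in NN j. AE t in lborel. upd y j t \<notin> Z"
    using P.AE_pair by fastforce
  have "AE y in NN j. (\<lambda>t. g (upd y j t)) absolutely_integrable_on {t. upd y j t \<in> S} \<and>
        G y = integral {t. upd y j t \<in> S} (\<lambda>t. g (upd y j t))"
    using ae1 ae2
  proof eventually_elim
    case (elim y)
    define phi where "phi = (\<lambda>t. indicator {t. upd y j t \<in> S} t *\<^sub>R g (upd y j t))"
    have phi_eq: "phi t = gS (upd y j t)" for t
      by (simp add: phi_def gS_def indicator_def)
    have aeL: "AE t in lborel. phi t = g0 (upd y j t)"
      using elim(2) by eventually_elim (use Z in \<open>auto simp: phi_eq\<close>)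
    have m0[measurable]: "(\<lambda>t. g0 (upd y j t)) \<in> borel_measurable borel"
      by measurable
    have m0': "(\<lambda>t. g0 (upd y j t)) \<in> borel_measurable lebesgue"
      by (rule measurable_completion) simp
    have aeL': "AE t in lebesgue. g0 (upd y j t) = phi t"
      using AE_completion[OF aeL] by (auto elim: eventually_mono)
    have mphi: "phi \<in> borel_measurable lebesgue"
      by (rule borel_measurable_AE[OF m0' aeL'])
    have int0: "integrable lebesgue (\<lambda>t. g0 (upd y j t))"
      using elim(1) m0 by (simp add: integrable_completion)
    have intphi: "integrable lebesgue phi"
      using int0 integrable_cong_AE[OF m0' mphi aeL'] by simp
    then have si: "(\<lambda>t. g (upd y j t)) absolutely_integrable_on {t. upd y j t \<in> S}"
      unfolding set_integrable_def phi_def .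
    have "integral {t. upd y j t \<in> S} (\<lambda>t. g (upd y j t)) = integral\<^sup>L lebesgue phi"
      using set_lebesgue_integral_eq_integral(2)[OF si] by (simp add: set_lebesgue_integral_def phi_def)
    also have "\<dots> = integral\<^sup>L lebesgue (\<lambda>t. g0 (upd y j t))"
      using aeL' by (intro integral_cong_AE) (auto simp: mphi m0')
    also have "\<dots> = G y" unfolding G_def using integral_completion[of "\<lambda>t. g0 (upd y j t)" lborel] m0 by simp
    finally show ?case using si by simp
  qed
  then show ?thesis using Gi GI eq1 by (intro exI[of _ G]) auto
qed



lemma ftc_interior:
  fixes phi psi :: "real \<Rightarrow> real"
  assumes der: "\<And>t. t \<in> {a<..<b} \<Longrightarrow> (phi has_real_derivative psi t) (at t)"
    and uv: "a < u" "u \<le> v" "v < b"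
  shows "(psi has_integral (phi v - phi u)) {u..v}"
proof (rule fundamental_theorem_of_calculus[OF uv(2)])
  fix x assume x: "x \<in> {u..v}"
  then have "x \<in> {a<..<b}" using uv by auto
  then have "(phi has_real_derivative psi x) (at x within {u..v})"
    using der has_field_derivative_at_within by blast
  then show "(phi has_vector_derivative psi x) (at x within {u..v})"
    by (simp add: has_real_derivative_iff_has_vector_derivative)
qed

lemma one_dim:
  fixes phi psi :: "real \<Rightarrow> real" and a b c :: real and S :: "real set"
  assumes ab: "a < b" and Sint: "{a<..<b} \<subseteq> S" and Ssub: "S \<subseteq> {a..b}"
    and deriv: "\<And>t. t \<in> {a<..<b} \<Longrightarrow> (phi has_real_derivative psi t) (at t within S)"
    and psi: "psi absolutely_integrable_on S"
  shows "(\<lambda>t. phi t * (b - 2*t + a)) absolutely_integrable_on S"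
    and "integral S (\<lambda>t. c*(b-t)*(t-a) * psi t) = - c * integral S (\<lambda>t. phi t * (b - 2*t + a))"
proof -
  define I where "I = {a<..<b}"
  have negS: "negligible {x \<in> S - {a..b}. f x \<noteq> 0}" "negligible {x \<in> {a..b} - S. f x \<noteq> 0}"
    for f :: "real \<Rightarrow> real"
  proof -
    have "{x \<in> S - {a..b}. f x \<noteq> 0} = {}" using Ssub by auto
    moreover have "{x \<in> {a..b} - S. f x \<noteq> 0} \<subseteq> {a,b}"
    proof
      fix x assume x: "x \<in> {x \<in> {a..b} - S. f x \<noteq> 0}"
      show "x \<in> {a,b}"
      proof (rule ccontr)
        assume "x \<notin> {a,b}"
        then have "x \<in> {a<..<b}" using x by auto
        then show False using x Sint by blast
      qed
    qed
    ultimately show "negligible {x \<in> S - {a..b}. f x \<noteq> 0}" "negligible {x \<in> {a..b} - S. f x \<noteq> 0}"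
      by (auto intro: negligible_subset[of "{a,b}"])
  qed
  have negI: "negligible {x \<in> I - {a..b}. f x \<noteq> 0}" "negligible {x \<in> {a..b} - I. f x \<noteq> 0}"
    for f :: "real \<Rightarrow> real"
  proof -
    have "{x \<in> I - {a..b}. f x \<noteq> 0} = {}" by (auto simp: I_def)
    moreover have "{x \<in> {a..b} - I. f x \<noteq> 0} \<subseteq> {a,b}" by (auto simp: I_def)
    ultimately show "negligible {x \<in> I - {a..b}. f x \<noteq> 0}" "negligible {x \<in> {a..b} - I. f x \<noteq> 0}"
      by (auto intro: negligible_subset[of "{a,b}"])
  qed
  have der: "(phi has_real_derivative psi t) (at t)" if "t \<in> I" for t
  proof -
    have "t \<in> interior {a<..<b}" using that by (simp add: I_def interior_open)
    then have "t \<in> interior S" using interior_mono[OF Sint] by blast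
    then show ?thesis using deriv[of t] that at_within_interior[of t S] by (simp add: I_def)
  qed
  have psi_ab: "psi absolutely_integrable_on {a..b}"
    using psi absolutely_integrable_spike_set_eq[OF negS] by blast
  then have psi_int: "psi integrable_on {a..b}" and apsi_int: "(\<lambda>t. norm (psi t)) integrable_on {a..b}"
    by (auto simp: absolutely_integrable_on_def)
  define K where "K = integral {a..b} (\<lambda>t. norm (psi t))"
  define m where "m = (a + b) / 2"
  have mI: "m \<in> I" using ab by (auto simp: m_def I_def)
  have bnd_int: "\<bar>phi v - phi u\<bar> \<le> K" if "u \<in> I" "v \<in> I" "u \<le> v" for u v
  proof -
    have hi: "(psi has_integral (phi v - phi u)) {u..v}"
      using ftc_interior[of a b phi psi u v] der that by (auto simp: I_def)
    have sub: "{u..v} \<subseteq> {a..b}" using that by (auto simp: I_def)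
    have "\<bar>phi v - phi u\<bar> = norm (integral {u..v} psi)" using hi by (simp add: integral_unique)
    also have "\<dots> \<le> integral {u..v} (\<lambda>t. norm (psi t))"
      using integrable_on_subinterval[OF psi_int sub] integrable_on_subinterval[OF apsi_int sub]
      by (intro integral_norm_bound_integral) auto
    also have "\<dots> \<le> K" unfolding K_def
      using integrable_on_subinterval[OF apsi_int sub] apsi_int sub
      by (intro integral_subset_le) auto
    finally show ?thesis .
  qed
  define M where "M = \<bar>phi m\<bar> + K"
  have phibnd: "\<bar>phi t\<bar> \<le> M" if "t \<in> I" for t
  proof (cases "m \<le> t")
    case True then show ?thesis using bnd_int[OF mI that True] by (simp add: M_def)
  next
    case False then show ?thesis using bnd_int[OF that mI] by (simp add: M_def)
  qed
  have contI: "continuous_on I phi"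
    using der by (intro continuous_at_imp_continuous_on) (auto intro: DERIV_isCont)
  have I_leb: "I \<in> sets lebesgue" by (simp add: I_def)
  have phiw_meas: "(\<lambda>t. phi t * (b - 2*t + a)) \<in> borel_measurable (lebesgue_on I)"
    by (intro continuous_imp_measurable_on_sets_lebesgue continuous_intros contI I_leb)
  have wbnd: "\<bar>b - 2*t + a\<bar> \<le> b - a" if "t \<in> I" for t using that by (auto simp: I_def)
  have phiw_I: "(\<lambda>t. phi t * (b - 2*t + a)) absolutely_integrable_on I"
  proof (rule measurable_bounded_by_integrable_imp_absolutely_integrable[OF phiw_meas I_leb])
    show "(\<lambda>t. M * (b - a)) integrable_on I" by (simp add: I_def integrable_on_const)
    fix t assume t: "t \<in> I"
    show "norm (phi t * (b - 2*t + a)) \<le> M * (b - a)"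
      using phibnd[OF t] wbnd[OF t] by (simp add: abs_mult mult_mono')
  qed
  show phiw_S: "(\<lambda>t. phi t * (b - 2*t + a)) absolutely_integrable_on S"
    using phiw_I absolutely_integrable_spike_set_eq[OF negI] absolutely_integrable_spike_set_eq[OF negS] by blast
  have phiw_ab: "(\<lambda>t. phi t * (b - 2*t + a)) absolutely_integrable_on {a..b}"
    using phiw_I absolutely_integrable_spike_set_eq[OF negI] by blast
  have hpsi_ab: "(\<lambda>t. c*(b-t)*(t-a) * psi t) absolutely_integrable_on {a..b}"
  proof (rule absolutely_integrable_bounded_measurable_product_real[OF _ _ _ psi_ab])
    show "(\<lambda>t. c*(b-t)*(t-a)) \<in> borel_measurable (lebesgue_on {a..b})"
      by (intro continuous_imp_measurable_on_sets_lebesgue continuous_intros) auto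
    show "bounded ((\<lambda>t. c*(b-t)*(t-a)) ` {a..b})"
      by (intro compact_imp_bounded compact_continuous_image continuous_intros) auto
  qed auto
  define Fp where "Fp = (\<lambda>t. c * (phi t * (b - 2*t + a)) + c*(b-t)*(t-a) * psi t)"
  have Fp_ab: "Fp absolutely_integrable_on {a..b}"
    unfolding Fp_def using phiw_ab hpsi_ab by (intro set_integral_add(1) set_integrable_mult_right) auto
  then have Fp_int: "Fp integrable_on {a..b}" by (simp add: absolutely_integrable_on_def)
  define F where "F = (\<lambda>t. c*(b-t)*(t-a) * phi t)"
  have Fder: "(F has_real_derivative Fp t) (at t)" if "t \<in> I" for t
  proof -
    have "((\<lambda>t. c*(b-t)*(t-a)) has_real_derivative c*(b - 2*t + a)) (at t)"
      by (auto intro!: derivative_eq_intros simp: algebra_simps)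
    from DERIV_mult[OF this der[OF that]]
    have D: "(F has_real_derivative (c*(b - 2*t + a) * phi t + psi t * (c*(b-t)*(t-a)))) (at t)"
      unfolding F_def .
    have "Fp t = c*(b - 2*t + a) * phi t + psi t * (c*(b-t)*(t-a))"
      by (simp add: Fp_def algebra_simps)
    with D show ?thesis by simp
  qed
  define Psi where "Psi = (\<lambda>x. integral {a..x} Fp)"
  have Psi_cont: "continuous_on {a..b} Psi" unfolding Psi_def
    by (rule indefinite_integral_continuous_1[OF Fp_int])
  have Psi_diff: "Psi v - Psi u = F v - F u" if "u \<in> I" "v \<in> I" "u \<le> v" for u v
  proof -
    have "(Fp has_integral (F v - F u)) {u..v}"
      using ftc_interior[of a b F Fp u v] Fder that by (auto simp: I_def)
    moreover have "Psi v = Psi u + integral {u..v} Fp"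
      unfolding Psi_def using that
      using Henstock_Kurzweil_Integration.integral_combine[of a u v Fp] integrable_on_subinterval[OF Fp_int, of a v]
      by (auto simp: I_def)
    ultimately show ?thesis by (simp add: integral_unique)
  qed
  define C where "C = Psi m - F m"
  have PsiC: "Psi t - F t = C" if "t \<in> I" for t
  proof (cases "m \<le> t")
    case True then show ?thesis using Psi_diff[OF mI that True] by (simp add: C_def)
  next
    case False then show ?thesis using Psi_diff[OF that mI] by (simp add: C_def)
  qed
  have evR: "eventually (\<lambda>t. t \<in> I) (at_right a)"
    using ab by (intro eventually_at_rightI[of a b]) (auto simp: I_def)
  have evL: "eventually (\<lambda>t. t \<in> I) (at_left b)"
    using ab by (intro eventually_at_leftI[of a b]) (auto simp: I_def)
  have FR: "(F \<longlongrightarrow> 0) (at_right a)"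
  proof (rule tendsto_0_le[where f="\<lambda>t. t - a" and K="\<bar>c\<bar> * (b - a) * M"])
    show "((\<lambda>t. t - a) \<longlongrightarrow> 0) (at_right a)"
      by (intro tendsto_eq_intros) (auto intro: tendsto_ident_at)
    show "eventually (\<lambda>t. norm (F t) \<le> norm (t - a) * (\<bar>c\<bar> * (b - a) * M)) (at_right a)"
      using evR
    proof eventually_elim
      case (elim t)
      have "norm (F t) = \<bar>c\<bar> * \<bar>b - t\<bar> * \<bar>t - a\<bar> * \<bar>phi t\<bar>" by (simp add: F_def abs_mult)
      also have "\<dots> \<le> \<bar>c\<bar> * (b - a) * \<bar>t - a\<bar> * M"
        using elim phibnd[OF elim] by (intro mult_mono mult_left_mono) (auto simp: I_def)
      finally show ?case by (simp add: algebra_simps)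
    qed
  qed
  have FL: "(F \<longlongrightarrow> 0) (at_left b)"
  proof (rule tendsto_0_le[where f="\<lambda>t. b - t" and K="\<bar>c\<bar> * (b - a) * M"])
    show "((\<lambda>t. b - t) \<longlongrightarrow> 0) (at_left b)"
      by (intro tendsto_eq_intros) (auto intro: tendsto_ident_at)
    show "eventually (\<lambda>t. norm (F t) \<le> norm (b - t) * (\<bar>c\<bar> * (b - a) * M)) (at_left b)"
      using evL
    proof eventually_elim
      case (elim t)
      have "norm (F t) = \<bar>c\<bar> * \<bar>b - t\<bar> * \<bar>t - a\<bar> * \<bar>phi t\<bar>" by (simp add: F_def abs_mult)
      also have "\<dots> \<le> \<bar>c\<bar> * \<bar>b - t\<bar> * (b - a) * M"
      proof -
        have "\<bar>t - a\<bar> * \<bar>phi t\<bar> \<le> (b - a) * M"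
          using elim phibnd[OF elim] by (intro mult_mono) (auto simp: I_def)
        then have "(\<bar>c\<bar> * \<bar>b - t\<bar>) * (\<bar>t - a\<bar> * \<bar>phi t\<bar>) \<le> (\<bar>c\<bar> * \<bar>b - t\<bar>) * ((b - a) * M)"
          by (intro mult_left_mono) auto
        then show ?thesis by (simp add: mult_ac)
      qed
      finally show ?case by (simp add: algebra_simps)
    qed
  qed
  have PsiR: "(Psi \<longlongrightarrow> Psi a) (at_right a)"
  proof -
    have "(Psi \<longlongrightarrow> Psi a) (at a within {a..b})"
      using Psi_cont ab unfolding continuous_on_def by auto
    then show ?thesis using at_within_Icc_at_right[OF ab] by simp
  qed
  have PsiL: "(Psi \<longlongrightarrow> Psi b) (at_left b)"
  proof -
    have "(Psi \<longlongrightarrow> Psi b) (at b within {a..b})"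
      using Psi_cont ab unfolding continuous_on_def by auto
    then show ?thesis using at_within_Icc_at_left[OF ab] by simp
  qed
  have "((\<lambda>t. Psi t - F t) \<longlongrightarrow> Psi a - 0) (at_right a)" by (intro tendsto_diff PsiR FR)
  moreover have "((\<lambda>t. Psi t - F t) \<longlongrightarrow> C) (at_right a)"
    by (rule Lim_transform_eventually[OF tendsto_const]) (use evR PsiC in \<open>auto elim: eventually_mono\<close>)
  ultimately have C1: "C = Psi a" using tendsto_unique[OF trivial_limit_at_right_real] by (metis diff_zero)
  have "((\<lambda>t. Psi t - F t) \<longlongrightarrow> Psi b - 0) (at_left b)" by (intro tendsto_diff PsiL FL)
  moreover have "((\<lambda>t. Psi t - F t) \<longlongrightarrow> C) (at_left b)"
    by (rule Lim_transform_eventually[OF tendsto_const]) (use evL PsiC in \<open>auto elim: eventually_mono\<close>)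
  ultimately have C2: "C = Psi b" using tendsto_unique[OF trivial_limit_at_left_real] by (metis diff_zero)
  have "Psi a = 0" by (simp add: Psi_def)
  then have "integral {a..b} Fp = 0" using C1 C2 by (simp add: Psi_def)
  moreover have "integral {a..b} Fp = c * integral {a..b} (\<lambda>t. phi t * (b - 2*t + a)) + integral {a..b} (\<lambda>t. c*(b-t)*(t-a) * psi t)"
  proof -
    have i1: "(\<lambda>t. phi t * (b - 2*t + a)) integrable_on {a..b}" and i2: "(\<lambda>t. c*(b-t)*(t-a) * psi t) integrable_on {a..b}"
      using phiw_ab hpsi_ab by (auto simp: absolutely_integrable_on_def)
    have i1': "(\<lambda>t. c * (phi t * (b - 2*t + a))) integrable_on {a..b}"
      using integrable_on_cmult_left[OF i1] by simp
    show ?thesis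
      using integral_add[OF i1' i2] by (simp add: Fp_def)
  qed
  ultimately have eqab: "integral {a..b} (\<lambda>t. c*(b-t)*(t-a) * psi t) = - c * integral {a..b} (\<lambda>t. phi t * (b - 2*t + a))"
    by simp
  show "integral S (\<lambda>t. c*(b-t)*(t-a) * psi t) = - c * integral S (\<lambda>t. phi t * (b - 2*t + a))"
    using eqab integral_spike_set[OF negS] by metis
qed



lemma cube_iff: "x \<in> unit_cube \<longleftrightarrow> (\<forall>i. 0 \<le> x$i \<and> x$i \<le> 1)"
  by (simp add: unit_cube_def mem_box_cart)

lemma region_lt:
  "x \<in> perm_region \<pi> \<Longrightarrow> 1 \<le> p \<Longrightarrow> p < q \<Longrightarrow> q \<le> CARD('n) \<Longrightarrow> x $ (\<pi> p) < x $ ((\<pi>::nat \<Rightarrow> 'n::finite) q)"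
  by (simp add: perm_region_def)

lemma perms_bij: "\<pi> \<in> perms \<Longrightarrow> bij_betw \<pi> {1..CARD('n)} (UNIV::'n::finite set)"
  by (simp add: perms_def)

lemma region_cube: "x \<in> perm_region \<pi> \<Longrightarrow> x \<in> unit_cube"
  by (simp add: perm_region_def)

lemma region_less_iff:
  assumes "\<pi> \<in> perms" "x \<in> perm_region \<pi>" "p \<in> {1..CARD('n)}" "q \<in> {1..CARD('n)}"
  shows "x $ (\<pi> p) < x $ ((\<pi>::nat \<Rightarrow> 'n::finite) q) \<longleftrightarrow> p < q"
proof
  assume lt: "x $ (\<pi> p) < x $ (\<pi> q)"
  show "p < q"
  proof (rule ccontr)
    assume "\<not> p < q"
    then have "q < p \<or> q = p" by auto
    then show False using region_lt[OF assms(2), of q p] assms(3,4) lt by auto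
  qed
next
  assume "p < q" then show "x $ (\<pi> p) < x $ (\<pi> q)"
    using region_lt[OF assms(2), of p q] assms(3,4) by auto
qed

lemma rank_region:
  assumes "\<pi> \<in> perms" "x \<in> perm_region \<pi>" "m \<in> {1..CARD('n)}"
  shows "card {i. x $ i < x $ ((\<pi>::nat \<Rightarrow> 'n::finite) m)} = m - 1"
proof -
  have bij: "bij_betw \<pi> {1..CARD('n)} (UNIV::'n set)" using perms_bij[OF assms(1)] .
  have "{i. x $ i < x $ (\<pi> m)} = \<pi> ` {1..<m}"
  proof
    show "{i. x $ i < x $ (\<pi> m)} \<subseteq> \<pi> ` {1..<m}"
    proof
      fix i assume i: "i \<in> {i. x $ i < x $ (\<pi> m)}"
      obtain m' where m': "m' \<in> {1..CARD('n)}" "i = \<pi> m'"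
        using bij by (metis UNIV_I bij_betw_imp_surj_on imageE)
      then have "m' < m" using i region_less_iff[OF assms(1,2) m'(1) assms(3)] by simp
      then show "i \<in> \<pi> ` {1..<m}" using m' by auto
    qed
  next
    show "\<pi> ` {1..<m} \<subseteq> {i. x $ i < x $ (\<pi> m)}"
    proof
      fix i assume "i \<in> \<pi> ` {1..<m}"
      then obtain m' where m': "m' \<in> {1..<m}" "i = \<pi> m'" by auto
      then show "i \<in> {i. x $ i < x $ (\<pi> m)}"
        using region_less_iff[OF assms(1,2), of m' m] assms(3) by auto
    qed
  qed
  moreover have "inj_on \<pi> {1..<m}"
    by (rule inj_on_subset[OF bij_betw_imp_inj_on[OF bij]]) (use assms(3) in auto)
  ultimately show ?thesis by (simp add: card_image)
qed

lemma region_unique: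
  assumes "\<pi> \<in> perms" "\<sigma> \<in> perms" "x \<in> perm_region \<pi>" "x \<in> perm_region \<sigma>" "m \<in> {1..CARD('n)}"
  shows "\<pi> m = (\<sigma> m :: 'n::finite)"
proof (rule ccontr)
  assume ne: "\<pi> m \<noteq> \<sigma> m"
  have bij: "bij_betw \<pi> {1..CARD('n)} (UNIV::'n set)" using perms_bij[OF assms(1)] .
  obtain m' where m': "m' \<in> {1..CARD('n)}" "\<sigma> m = \<pi> m'"
    using bij by (metis UNIV_I bij_betw_imp_surj_on imageE)
  have "m' \<noteq> m" using ne m' by auto
  have c1: "card {i. x $ i < x $ (\<pi> m)} = m - 1" using rank_region[OF assms(1,3,5)] .
  have c2: "card {i. x $ i < x $ (\<sigma> m)} = m - 1" using rank_region[OF assms(2,4,5)] .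
  show False
  proof (cases "m' < m")
    case True
    then have lt: "x $ (\<sigma> m) < x $ (\<pi> m)" using region_less_iff[OF assms(1,3) m'(1) assms(5)] m' by simp
    have "{i. x $ i < x $ (\<sigma> m)} \<subset> {i. x $ i < x $ (\<pi> m)}"
      using lt by auto
    then have "card {i. x $ i < x $ (\<sigma> m)} < card {i. x $ i < x $ (\<pi> m)}"
      by (intro psubset_card_mono) auto
    then show False using c1 c2 by simp
  next
    case False
    then have "m < m'" using \<open>m' \<noteq> m\<close> by simp
    then have lt: "x $ (\<pi> m) < x $ (\<sigma> m)" using region_less_iff[OF assms(1,3) assms(5) m'(1)] m' by simp
    have "{i. x $ i < x $ (\<pi> m)} \<subset> {i. x $ i < x $ (\<sigma> m)}"
      using lt by auto
    then have "card {i. x $ i < x $ (\<pi> m)} < card {i. x $ i < x $ (\<sigma> m)}"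
      by (intro psubset_card_mono) auto
    then show False using c1 c2 by simp
  qed
qed

lemma sorted_region:
  assumes "\<pi> \<in> perms" "x \<in> perm_region (\<pi>::nat \<Rightarrow> 'n::finite)"
  shows "sorted_list_of_multiset (image_mset (\<lambda>i. x $ i) (mset_set (UNIV::'n set)))
      = map (\<lambda>m. x $ (\<pi> m)) [1..<CARD('n)+1]"
proof -
  have bij: "bij_betw \<pi> {1..CARD('n)} (UNIV::'n set)" using perms_bij[OF assms(1)] .
  let ?xs = "map (\<lambda>m. x $ (\<pi> m)) [1..<CARD('n)+1]"
  have su: "set [1..<CARD('n)+1] = {1..CARD('n)}" by auto
  have dist: "distinct (map \<pi> [1..<CARD('n)+1])"
    using bij_betw_imp_inj_on[OF bij] unfolding distinct_map su by simp
  have set: "set (map \<pi> [1..<CARD('n)+1]) = UNIV"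
    using bij_betw_imp_surj_on[OF bij] unfolding set_map su by simp
  have "mset_set (UNIV::'n set) = mset (map \<pi> [1..<CARD('n)+1])"
    using mset_set_set[OF dist] set by simp
  then have ms: "image_mset (\<lambda>i. x $ i) (mset_set (UNIV::'n set)) = mset ?xs"
    by (simp add: mset_map multiset.map_comp comp_def)
  have "sorted ?xs"
    unfolding sorted_iff_nth_mono_less
  proof (intro allI impI)
    fix p q assume pq: "p < q" "q < length ?xs"
    then show "?xs ! p \<le> ?xs ! q"
      using region_lt[OF assms(2), of "p+1" "q+1"] by (simp del: upt_Suc)
  qed
  then have "sort ?xs = ?xs" by (rule sorted_sort_id)
  then show ?thesis using ms sorted_list_of_multiset_mset[of ?xs] by (simp only:)
qed

lemma ord_stat_region:
  assumes "\<pi> \<in> perms" "x \<in> perm_region (\<pi>::nat \<Rightarrow> 'n::finite)" "m \<in> {1..CARD('n)}"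
  shows "ord_stat x m = x $ (\<pi> m)"
proof -
  have "[1..<CARD('n)+1] ! (m - 1) = m" using assms(3) by (simp del: upt_Suc)
  moreover have "m - 1 < length [1..<CARD('n)+1]" using assms(3) by (simp del: upt_Suc) linarith
  ultimately show ?thesis using assms(3)
    by (simp add: ord_stat_def sorted_region[OF assms(1,2)] del: upt_Suc)
qed

lemma exists_region:
  fixes x :: "real^'n::finite"
  assumes cube: "x \<in> unit_cube" and dist: "\<And>i i'. i \<noteq> i' \<Longrightarrow> x $ i \<noteq> x $ i'"
  shows "\<exists>\<pi>\<in>perms. x \<in> perm_region \<pi>"
proof -
  define rk where "rk = (\<lambda>i. card {l. x $ l < x $ i} + 1)"
  have mono: "rk i < rk i'" if "x $ i < x $ i'" for i i'
  proof -
    have "{l. x $ l < x $ i} \<subset> {l. x $ l < x $ i'}" using that by auto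
    then have "card {l. x $ l < x $ i} < card {l. x $ l < x $ i'}" by (intro psubset_card_mono) auto
    then show ?thesis by (simp add: rk_def)
  qed
  have inj: "inj rk"
  proof (rule injI)
    fix i i' assume eq: "rk i = rk i'"
    show "i = i'"
    proof (rule ccontr)
      assume "i \<noteq> i'"
      then have "x $ i < x $ i' \<or> x $ i' < x $ i" using dist[of i i'] by linarith
      then show False using mono eq by fastforce
    qed
  qed
  have range_sub: "range rk \<subseteq> {1..CARD('n)}"
  proof
    fix r assume "r \<in> range rk"
    then obtain i where r: "r = rk i" by auto
    have "{l. x $ l < x $ i} \<subseteq> UNIV - {i}" by auto
    then have "card {l. x $ l < x $ i} \<le> card (UNIV - {i} :: 'n set)" by (intro card_mono) auto
    then have "card {l. x $ l < x $ i} \<le> CARD('n) - 1" by (simp add: card_Diff_singleton)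
    moreover have "CARD('n) \<ge> 1" by (simp add: Suc_leI)
    ultimately have "card {l. x $ l < x $ i} + 1 \<le> CARD('n)" by linarith
    then show "r \<in> {1..CARD('n)}" by (simp add: r rk_def)
  qed
  have "card (range rk) = CARD('n)" using inj by (simp add: card_image)
  then have range_eq: "range rk = {1..CARD('n)}"
    using range_sub by (intro card_subset_eq) auto
  have bij_rk: "bij_betw rk UNIV {1..CARD('n)}" using inj range_eq by (simp add: bij_betw_def)
  define \<pi> where "\<pi> = inv_into UNIV rk"
  have bij: "bij_betw \<pi> {1..CARD('n)} UNIV" unfolding \<pi>_def by (rule bij_betw_inv_into[OF bij_rk])
  have rk_pi: "rk (\<pi> m) = m" if "m \<in> {1..CARD('n)}" for m
    unfolding \<pi>_def using that range_eq by (metis f_inv_into_f)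
  have "x \<in> perm_region \<pi>"
    unfolding perm_region_def
  proof (intro CollectI conjI cube allI impI)
    fix p q assume pq: "1 \<le> p" "p < q" "q \<le> CARD('n)"
    show "x $ (\<pi> p) < x $ (\<pi> q)"
    proof (rule ccontr)
      assume "\<not> x $ (\<pi> p) < x $ (\<pi> q)"
      moreover have "\<pi> p \<noteq> \<pi> q" using rk_pi[of p] rk_pi[of q] pq by (metis atLeastAtMost_iff less_imp_le less_le_trans nat_neq_iff)
      ultimately have "x $ (\<pi> q) < x $ (\<pi> p)" using dist by (meson linorder_neqE_linordered_idom)
      then have "rk (\<pi> q) < rk (\<pi> p)" by (rule mono)
      then show False using rk_pi[of p] rk_pi[of q] pq by simp
    qed
  qed
  moreover have "\<pi> \<in> perms" using bij by (simp add: perms_def)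
  ultimately show ?thesis by blast
qed



definition aa :: "(nat \<Rightarrow> 'n::finite) \<Rightarrow> nat \<Rightarrow> real^'n \<Rightarrow> real" where
  "aa \<pi> k y = (if k = 1 then 0 else y $ \<pi> (k - 1))"
definition bb :: "(nat \<Rightarrow> 'n::finite) \<Rightarrow> nat \<Rightarrow> real^'n \<Rightarrow> real" where
  "bb \<pi> k y = (if k = CARD('n) then 1 else y $ \<pi> (k + 1))"

lemma perm_inj_eq:
  assumes "\<pi> \<in> perms" "p \<in> {1..CARD('n)}" "q \<in> {1..CARD('n)}"
  shows "(\<pi> p = (\<pi> q :: 'n::finite)) \<longleftrightarrow> p = q"
  using bij_betw_imp_inj_on[OF perms_bij[OF assms(1)]] assms(2,3) by (auto dest: inj_onD)

context
  fixes \<pi> :: "nat \<Rightarrow> 'n::finite" and k :: nat and y :: "real^'n"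
  assumes pi: "\<pi> \<in> perms" and k: "1 \<le> k" "k \<le> CARD('n)"
begin

lemma upd_other: "p \<in> {1..CARD('n)} \<Longrightarrow> p \<noteq> k \<Longrightarrow> upd y (\<pi> k) t $ \<pi> p = y $ \<pi> p"
  using perm_inj_eq[OF pi, of p k] k by auto

lemma km1: "k \<noteq> 1 \<Longrightarrow> k - 1 \<in> {1..CARD('n)}" "k - 1 \<noteq> k"
  using k by auto

lemma kp1: "k \<noteq> CARD('n) \<Longrightarrow> k + 1 \<in> {1..CARD('n)}" "k + 1 \<noteq> k"
  using k by auto

lemma upd_km1: "k \<noteq> 1 \<Longrightarrow> upd y (\<pi> k) t $ \<pi> (k - 1) = y $ \<pi> (k - 1)"
  using upd_other[OF km1] by blast

lemma upd_kp1: "k \<noteq> CARD('n) \<Longrightarrow> upd y (\<pi> k) t $ \<pi> (k + 1) = y $ \<pi> (k + 1)"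
  using upd_other[OF kp1] by blast

lemma sec_lower: "upd y (\<pi> k) t \<in> perm_region \<pi> \<Longrightarrow> aa \<pi> k y \<le> t \<and> (k \<noteq> 1 \<longrightarrow> aa \<pi> k y < t)"
proof -
  assume x: "upd y (\<pi> k) t \<in> perm_region \<pi>"
  show ?thesis
  proof (cases "k = 1")
    case True
    have "0 \<le> upd y (\<pi> k) t $ \<pi> k" using region_cube[OF x] by (simp only: cube_iff)
    then show ?thesis using True by (simp add: aa_def)
  next
    case False
    then have "upd y (\<pi> k) t $ \<pi> (k-1) < upd y (\<pi> k) t $ \<pi> k" using region_lt[OF x, of "k-1" k] k by simp
    then show ?thesis using False upd_km1[of t] by (simp add: aa_def)
  qed
qed

lemma sec_upper: "upd y (\<pi> k) t \<in> perm_region \<pi> \<Longrightarrow> t \<le> bb \<pi> k y \<and> (k \<noteq> CARD('n) \<longrightarrow> t < bb \<pi> k y)"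
proof -
  assume x: "upd y (\<pi> k) t \<in> perm_region \<pi>"
  show ?thesis
  proof (cases "k = CARD('n)")
    case True
    have "upd y (\<pi> k) t $ \<pi> k \<le> 1" using region_cube[OF x] by (simp only: cube_iff)
    then show ?thesis using True by (simp add: bb_def)
  next
    case False
    then have "upd y (\<pi> k) t $ \<pi> k < upd y (\<pi> k) t $ \<pi> (k+1)" using region_lt[OF x, of k "k+1"] k by simp
    then show ?thesis using False upd_kp1[of t] by (simp add: bb_def)
  qed
qed

lemma sec_ab: "upd y (\<pi> k) t0 \<in> perm_region \<pi> \<Longrightarrow> aa \<pi> k y < bb \<pi> k y"
  using sec_lower[of t0] sec_upper[of t0] by (cases "k = 1"; cases "k = CARD('n)") (auto simp: aa_def bb_def)

lemma sec_sub: "{t. upd y (\<pi> k) t \<in> perm_region \<pi>} \<subseteq> {aa \<pi> k y .. bb \<pi> k y}"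
  using sec_lower sec_upper by auto

lemma sec_sup:
  assumes x0: "upd y (\<pi> k) t0 \<in> perm_region \<pi>"
  shows "{aa \<pi> k y <..< bb \<pi> k y} \<subseteq> {t. upd y (\<pi> k) t \<in> perm_region \<pi>}"
proof
  fix t assume t: "t \<in> {aa \<pi> k y <..< bb \<pi> k y}"
  let ?z = "upd y (\<pi> k) t0" and ?x = "upd y (\<pi> k) t"
  have c0: "\<forall>i. 0 \<le> ?z $ i \<and> ?z $ i \<le> 1" using region_cube[OF x0] unfolding cube_iff .
  have a0: "0 \<le> aa \<pi> k y"
  proof (cases "k = 1")
    case False
    then have "aa \<pi> k y = ?z $ \<pi> (k-1)" using upd_km1[of t0] by (simp add: aa_def)
    then show ?thesis using c0 by simp
  qed (simp add: aa_def)
  have b1: "bb \<pi> k y \<le> 1"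
  proof (cases "k = CARD('n)")
    case False
    then have "bb \<pi> k y = ?z $ \<pi> (k+1)" using upd_kp1[of t0] by (simp add: bb_def)
    then show ?thesis using c0 by simp
  qed (simp add: bb_def)
  have same: "?x $ \<pi> p = ?z $ \<pi> p" if "p \<in> {1..CARD('n)}" "p \<noteq> k" for p
    using upd_other[OF that, of t] upd_other[OF that, of t0] by simp
  have cube: "?x \<in> unit_cube" unfolding cube_iff
  proof
    fix i show "0 \<le> ?x $ i \<and> ?x $ i \<le> 1"
      using c0[rule_format, of i] t a0 b1 by (cases "i = \<pi> k") auto
  qed
  show "t \<in> {t. upd y (\<pi> k) t \<in> perm_region \<pi>}"
    unfolding perm_region_def
  proof (intro CollectI conjI cube allI impI)
    fix p q assume pq: "1 \<le> p" "p < q" "q \<le> CARD('n)"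
    show "?x $ \<pi> p < ?x $ \<pi> q"
    proof (cases "p = k")
      case True
      then have kn: "k \<noteq> CARD('n)" and q1: "k + 1 \<le> q" using pq by auto
      have "?x $ \<pi> p = t" using True by simp
      also have "t < bb \<pi> k y" using t by simp
      also have "bb \<pi> k y = ?z $ \<pi> (k+1)" using kn upd_kp1[of t0] by (simp add: bb_def)
      also have "\<dots> \<le> ?z $ \<pi> q"
      proof (cases "q = k+1")
        case False
        show ?thesis by (rule less_imp_le, rule region_lt[OF x0, of "k+1" q]) (use pq q1 False k in auto)
      qed simp
      also have "\<dots> = ?x $ \<pi> q" using same[of q] pq True by simp
      finally show ?thesis .
    next
      case pk: False
      show ?thesis
      proof (cases "q = k")
        case True
        then have k1: "k \<noteq> 1" and p1: "p \<le> k - 1" using pq by auto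
        have "?x $ \<pi> p = ?z $ \<pi> p" using same[of p] pq pk by simp
        also have "\<dots> \<le> ?z $ \<pi> (k-1)"
        proof (cases "p = k-1")
          case False
          show ?thesis by (rule less_imp_le, rule region_lt[OF x0, of p "k-1"]) (use pq p1 False k in auto)
        qed simp
        also have "\<dots> = aa \<pi> k y" using k1 upd_km1[of t0] by (simp add: aa_def)
        also have "aa \<pi> k y < t" using t by simp
        also have "t = ?x $ \<pi> q" using True by simp
        finally show ?thesis .
      next
        case False
        then show ?thesis using same[of p] same[of q] pq pk region_lt[OF x0 pq] by simp
      qed
    qed
  qed
qed

lemma sec_ord_stat:
  assumes x: "upd y (\<pi> k) t \<in> perm_region \<pi>"
  shows "ord_stat (upd y (\<pi> k) t) (k - 1) = aa \<pi> k y"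
    and "ord_stat (upd y (\<pi> k) t) k = t"
    and "ord_stat (upd y (\<pi> k) t) (k + 1) = bb \<pi> k y"
proof -
  show "ord_stat (upd y (\<pi> k) t) (k - 1) = aa \<pi> k y"
  proof (cases "k = 1")
    case True then show ?thesis by (simp add: aa_def ord_stat_def)
  next
    case False
    then show ?thesis using ord_stat_region[OF pi x km1(1)[OF False]] upd_km1[of t] by (simp add: aa_def)
  qed
  show "ord_stat (upd y (\<pi> k) t) k = t"
    using ord_stat_region[OF pi x, of k] k by simp
  show "ord_stat (upd y (\<pi> k) t) (k + 1) = bb \<pi> k y"
  proof (cases "k = CARD('n)")
    case True then show ?thesis by (simp add: bb_def ord_stat_def)
  next
    case False
    then show ?thesis using ord_stat_region[OF pi x kp1(1)[OF False]] upd_kp1[of t] by (simp add: bb_def)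
  qed
qed

end



lemma upd_axis: "upd y j t + s *\<^sub>R axis j 1 = upd y j (t + s)"
  by (simp add: vec_eq_iff axis_def upd_def)

lemma upd_self: "upd x j (x $ j) = x"
  by (simp add: vec_eq_iff upd_def)

lemma region_cong:
  assumes "\<And>m. m \<in> {1..CARD('n)} \<Longrightarrow> \<pi> m = (\<sigma> m :: 'n::finite)"
  shows "perm_region \<pi> = perm_region \<sigma>"
proof -
  have "(\<forall>i j. 1 \<le> i \<longrightarrow> i < j \<longrightarrow> j \<le> CARD('n) \<longrightarrow> x $ \<pi> i < x $ \<pi> j) \<longleftrightarrow>
        (\<forall>i j. 1 \<le> i \<longrightarrow> i < j \<longrightarrow> j \<le> CARD('n) \<longrightarrow> x $ \<sigma> i < x $ \<sigma> j)" for x :: "real^'n"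
  proof -
    have "x $ \<pi> i < x $ \<pi> j \<longleftrightarrow> x $ \<sigma> i < x $ \<sigma> j" if "1 \<le> i" "i < j" "j \<le> CARD('n)" for i j
      using assms[of i] assms[of j] that by simp
    then show ?thesis by blast
  qed
  then show ?thesis unfolding perm_region_def by blast
qed

lemma region_borel: "perm_region (\<pi>::nat \<Rightarrow> 'n::finite) \<in> sets borel"
proof -
  have "perm_region \<pi> = unit_cube \<inter> (\<Inter>p\<in>{1..CARD('n)}. \<Inter>q\<in>{p<..CARD('n)}. {x. x $ \<pi> p < x $ \<pi> q})"
    unfolding perm_region_def by auto
  moreover have "open (\<Inter>p\<in>{1..CARD('n)}. \<Inter>q\<in>{p<..CARD('n)}. {x::real^'n. x $ \<pi> p < x $ \<pi> q})"
    by (intro open_INT finite_atLeastAtMost finite_greaterThanAtMost ballI open_Collect_less continuous_on_component continuous_on_id)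
  moreover have "closed (unit_cube :: (real^'n) set)" by (simp add: unit_cube_def closed_cbox)
  ultimately show ?thesis by (simp add: borel_open borel_closed sets.Int)
qed

lemma region_leb: "perm_region (\<pi>::nat \<Rightarrow> 'n::finite) \<in> sets lebesgue"
  by (rule sets_completionI_sets) (simp add: region_borel)

lemma dd_lemma:
  fixes f :: "real^'n::finite \<Rightarrow> real"
  assumes pi: "\<pi> \<in> perms" and k: "1 \<le> k" "k \<le> CARD('n)"
    and x: "x \<in> perm_region \<pi>" and de: "dir_deriv_exists f k"
    and U: "open U" "0 \<in> U" "U \<subseteq> {s. x + s *\<^sub>R axis (\<pi> k) 1 \<in> perm_region \<pi>}"
  shows "((\<lambda>s. f (x + s *\<^sub>R axis (\<pi> k) 1)) has_real_derivative dir_deriv f k x) (at 0)"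
proof -
  let ?T = "{s. x + s *\<^sub>R axis (\<pi> k) 1 \<in> perm_region \<pi>}"
  have int: "0 \<in> interior ?T" using U interior_maximal by blast
  obtain d where d: "has_partial_within f (perm_region \<pi>) (\<pi> k) x d"
    using de pi x unfolding dir_deriv_exists_def by blast
  have d0: "((\<lambda>s. f (x + s *\<^sub>R axis (\<pi> k) 1)) has_real_derivative d) (at 0)"
    using d at_within_interior[OF int] unfolding has_partial_within_def by simp
  have "dir_deriv f k x = d"
    unfolding dir_deriv_def
  proof (rule the_equality)
    show "\<exists>\<pi>\<in>perms. x \<in> perm_region \<pi> \<and> has_partial_within f (perm_region \<pi>) (\<pi> k) x d"
      using pi x d by blast
  next
    fix d' assume "\<exists>\<sigma>\<in>perms. x \<in> perm_region \<sigma> \<and> has_partial_within f (perm_region \<sigma>) (\<sigma> k) x d'"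
    then obtain \<sigma> where s: "\<sigma> \<in> perms" "x \<in> perm_region \<sigma>" "has_partial_within f (perm_region \<sigma>) (\<sigma> k) x d'"
      by blast
    have eq: "\<sigma> m = \<pi> m" if "m \<in> {1..CARD('n)}" for m
      using region_unique[OF s(1) pi s(2) x that] .
    have "perm_region \<sigma> = perm_region \<pi>" by (rule region_cong[OF eq])
    moreover have "\<sigma> k = \<pi> k" using eq k by simp
    ultimately have "has_partial_within f (perm_region \<pi>) (\<pi> k) x d'" using s(3) by simp
    then have "((\<lambda>s. f (x + s *\<^sub>R axis (\<pi> k) 1)) has_real_derivative d') (at 0)"
      using at_within_interior[OF int] unfolding has_partial_within_def by simp
    then show "d' = d" using d0 DERIV_unique by blast
  qed
  then show ?thesis using d0 by simp
qed



definition wfun :: "nat \<Rightarrow> real^'n::finite \<Rightarrow> real" where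
  "wfun k x = ord_stat x (k + 1) - 2 * ord_stat x k + ord_stat x (k - 1)"

lemma region_os:
  assumes "\<pi> \<in> perms" "1 \<le> k" "k \<le> CARD('n)" "x \<in> perm_region (\<pi>::nat \<Rightarrow> 'n::finite)"
  shows "ord_stat x (k - 1) = aa \<pi> k x" "ord_stat x k = x $ \<pi> k" "ord_stat x (k + 1) = bb \<pi> k x"
proof -
  have x: "upd x (\<pi> k) (x $ \<pi> k) \<in> perm_region \<pi>" using assms(4) by (simp add: upd_self)
  show "ord_stat x (k - 1) = aa \<pi> k x" "ord_stat x k = x $ \<pi> k" "ord_stat x (k + 1) = bb \<pi> k x"
    using sec_ord_stat[OF assms(1-3) x] by (simp_all add: upd_self)
qed

lemma aa_cont: "continuous_on UNIV (aa (\<pi>::nat \<Rightarrow> 'n::finite) k)"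
  unfolding aa_def by (cases "k = 1") (auto intro!: continuous_intros)

lemma bb_cont: "continuous_on UNIV (bb (\<pi>::nat \<Rightarrow> 'n::finite) k)"
  unfolding bb_def by (cases "k = CARD('n)") (auto intro!: continuous_intros)

lemma aa_range: "x \<in> unit_cube \<Longrightarrow> 0 \<le> aa \<pi> k x \<and> aa \<pi> k x \<le> 1"
  unfolding aa_def cube_iff by auto

lemma bb_range: "x \<in> unit_cube \<Longrightarrow> 0 \<le> bb \<pi> k x \<and> bb \<pi> k x \<le> 1"
  unfolding bb_def cube_iff by auto

lemma bounded_cont_prod:
  fixes w :: "real^'n::finite \<Rightarrow> real" and g :: "real^'n \<Rightarrow> real"
  assumes "continuous_on UNIV w" "\<And>x. x \<in> R \<Longrightarrow> \<bar>w x\<bar> \<le> B" "R \<in> sets lebesgue"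
    and "g absolutely_integrable_on R"
  shows "(\<lambda>x. w x * g x) absolutely_integrable_on R"
proof (rule absolutely_integrable_bounded_measurable_product[OF bilinear_times])
  show "w \<in> borel_measurable (lebesgue_on R)"
    by (rule continuous_imp_measurable_on_sets_lebesgue[OF continuous_on_subset[OF assms(1)] assms(3)]) auto
  show "bounded (w ` R)" unfolding bounded_iff using assms(2) by auto
qed (use assms in auto)

lemma per_region:
  fixes f :: "real^'n::finite \<Rightarrow> real" and \<pi> :: "nat \<Rightarrow> 'n"
  assumes pi: "\<pi> \<in> perms" and k: "1 \<le> k" "k \<le> CARD('n)"
    and fi: "f absolutely_integrable_on unit_cube"
    and de: "dir_deriv_exists f k"
    and Di: "dir_deriv f k absolutely_integrable_on union_regions"
  shows "(\<lambda>x. f x * wfun k x) absolutely_integrable_on perm_region \<pi>"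
    and "(\<lambda>x. h_weight k x * dir_deriv f k x) absolutely_integrable_on perm_region \<pi>"
    and "integral (perm_region \<pi>) (\<lambda>x. h_weight k x * dir_deriv f k x)
       = - ((real CARD('n) + 1) * (real CARD('n) + 2)) * integral (perm_region \<pi>) (\<lambda>x. f x * wfun k x)"
proof -
  define c where "c = (real CARD('n) + 1) * (real CARD('n) + 2)"
  define R where "R = perm_region \<pi>"
  define j where "j = \<pi> k"
  have Rl: "R \<in> sets lebesgue" unfolding R_def by (rule region_leb)
  have Rc: "R \<subseteq> unit_cube" unfolding R_def using region_cube by blast
  have Ru: "R \<subseteq> union_regions" unfolding R_def union_regions_def using pi by blast
  have fR: "f absolutely_integrable_on R" by (rule set_integrable_subset[OF fi Rl Rc])
  have DR: "dir_deriv f k absolutely_integrable_on R" by (rule set_integrable_subset[OF Di Rl Ru])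
  define w where "w = (\<lambda>x. bb \<pi> k x - 2 * x $ \<pi> k + aa \<pi> k x)"
  define h where "h = (\<lambda>x. c * (bb \<pi> k x - x $ \<pi> k) * (x $ \<pi> k - aa \<pi> k x))"
  have w_eq: "wfun k x = w x" if "x \<in> R" for x
    using region_os[OF pi k that[unfolded R_def]] by (simp add: wfun_def w_def)
  have h_eq: "h_weight k x = h x" if "x \<in> R" for x
    using region_os[OF pi k that[unfolded R_def]] by (simp add: h_weight_def h_def c_def)
  have wc: "continuous_on UNIV w" unfolding w_def
    by (intro continuous_intros aa_cont bb_cont continuous_on_component continuous_on_id)
  have hc: "continuous_on UNIV h" unfolding h_def
    by (intro continuous_intros aa_cont bb_cont continuous_on_component continuous_on_id)
  have wb: "\<bar>w x\<bar> \<le> 4" if "x \<in> R" for x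
  proof -
    have "x \<in> unit_cube" using that Rc by auto
    then show ?thesis using aa_range[of x \<pi> k] bb_range[of x \<pi> k] unfolding w_def cube_iff
      by (auto simp: abs_le_iff dest!: spec[of _ "\<pi> k"])
  qed
  have hb: "\<bar>h x\<bar> \<le> c" if "x \<in> R" for x
  proof -
    have x: "x \<in> unit_cube" using that Rc by auto
    have c0: "c \<ge> 0" by (simp add: c_def)
    have b1: "\<bar>bb \<pi> k x - x $ \<pi> k\<bar> \<le> 1" and b2: "\<bar>x $ \<pi> k - aa \<pi> k x\<bar> \<le> 1"
      using aa_range[OF x, of \<pi> k] bb_range[OF x, of \<pi> k] x unfolding cube_iff
      by (auto simp: abs_le_iff dest!: spec[of _ "\<pi> k"])
    have "\<bar>h x\<bar> = c * (\<bar>bb \<pi> k x - x $ \<pi> k\<bar> * \<bar>x $ \<pi> k - aa \<pi> k x\<bar>)"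
      using c0 by (simp add: h_def abs_mult)
    also have "\<dots> \<le> c * (1 * 1)"
      using b1 b2 c0 by (intro mult_left_mono mult_mono) auto
    finally show ?thesis by simp
  qed
  have g1R: "(\<lambda>x. f x * wfun k x) absolutely_integrable_on R"
  proof -
    have "(\<lambda>x. w x * f x) absolutely_integrable_on R"
      by (rule bounded_cont_prod[OF wc wb Rl fR])
    moreover have "set_integrable lebesgue R (\<lambda>x. w x * f x) = set_integrable lebesgue R (\<lambda>x. f x * wfun k x)"
      by (rule set_integrable_cong) (auto simp: w_eq)
    ultimately show ?thesis by simp
  qed
  have g2R: "(\<lambda>x. h_weight k x * dir_deriv f k x) absolutely_integrable_on R"
  proof -
    have "(\<lambda>x. h x * dir_deriv f k x) absolutely_integrable_on R"
      by (rule bounded_cont_prod[OF hc hb Rl DR])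
    moreover have "set_integrable lebesgue R (\<lambda>x. h x * dir_deriv f k x) = set_integrable lebesgue R (\<lambda>x. h_weight k x * dir_deriv f k x)"
      by (rule set_integrable_cong) (auto simp: h_eq)
    ultimately show ?thesis by simp
  qed
  show "(\<lambda>x. f x * wfun k x) absolutely_integrable_on perm_region \<pi>" using g1R by (simp add: R_def)
  show "(\<lambda>x. h_weight k x * dir_deriv f k x) absolutely_integrable_on perm_region \<pi>" using g2R by (simp add: R_def)
  obtain G1 where G1: "integrable (NN j) G1" "integral R (\<lambda>x. f x * wfun k x) = integral\<^sup>L (NN j) G1"
    "AE y in NN j. (\<lambda>t. f (upd y j t) * wfun k (upd y j t)) absolutely_integrable_on {t. upd y j t \<in> R} \<and>
        G1 y = integral {t. upd y j t \<in> R} (\<lambda>t. f (upd y j t) * wfun k (upd y j t))"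
    using line_fubini[OF g1R, of j] by blast
  obtain G2 where G2: "integrable (NN j) G2" "integral R (\<lambda>x. h_weight k x * dir_deriv f k x) = integral\<^sup>L (NN j) G2"
    "AE y in NN j. (\<lambda>t. h_weight k (upd y j t) * dir_deriv f k (upd y j t)) absolutely_integrable_on {t. upd y j t \<in> R} \<and>
        G2 y = integral {t. upd y j t \<in> R} (\<lambda>t. h_weight k (upd y j t) * dir_deriv f k (upd y j t))"
    using line_fubini[OF g2R, of j] by blast
  obtain G3 where G3:
    "AE y in NN j. (\<lambda>t. dir_deriv f k (upd y j t)) absolutely_integrable_on {t. upd y j t \<in> R} \<and>
        G3 y = integral {t. upd y j t \<in> R} (\<lambda>t. dir_deriv f k (upd y j t))"
    using line_fubini[OF DR, of j] by blast
  have ae: "AE y in NN j. G2 y = - c * G1 y"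
    using G1(3) G2(3) G3
  proof eventually_elim
    case (elim y)
    define sec where "sec = {t. upd y j t \<in> R}"
    show ?case
    proof (cases "sec = {}")
      case True
      then show ?thesis using elim by (simp add: sec_def)
    next
      case False
      then obtain t0 where t0: "upd y (\<pi> k) t0 \<in> perm_region \<pi>" by (auto simp: sec_def R_def j_def)
      define a where "a = aa \<pi> k y"
      define b where "b = bb \<pi> k y"
      have ab: "a < b" unfolding a_def b_def by (rule sec_ab[OF pi k t0])
      have s1: "{a<..<b} \<subseteq> sec" unfolding a_def b_def sec_def R_def j_def by (rule sec_sup[OF pi k t0])
      have s2: "sec \<subseteq> {a..b}" unfolding a_def b_def sec_def R_def j_def by (rule sec_sub[OF pi k])
      have os: "ord_stat (upd y j t) (k - 1) = a" "ord_stat (upd y j t) k = t" "ord_stat (upd y j t) (k + 1) = b"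
        if "t \<in> sec" for t
        using sec_ord_stat[OF pi k, of y t] that by (auto simp: a_def b_def sec_def R_def j_def)
      have os': "ord_stat (upd y j t) (k - Suc 0) = a" "ord_stat (upd y j t) (Suc k) = b"
        if "t \<in> sec" for t
        using os[OF that] by simp_all
      define phi where "phi = (\<lambda>t. f (upd y j t))"
      define psi where "psi = (\<lambda>t. dir_deriv f k (upd y j t))"
      have deriv: "(phi has_real_derivative psi t) (at t within sec)" if t: "t \<in> {a<..<b}" for t
      proof -
        let ?x = "upd y j t"
        have xR: "?x \<in> perm_region \<pi>" using s1 t by (auto simp: sec_def R_def)
        have U: "{a - t<..<b - t} \<subseteq> {s. ?x + s *\<^sub>R axis (\<pi> k) 1 \<in> perm_region \<pi>}"
        proof
          fix s assume "s \<in> {a - t<..<b - t}"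
          then have "t + s \<in> sec" using s1 by auto
          then show "s \<in> {s. ?x + s *\<^sub>R axis (\<pi> k) 1 \<in> perm_region \<pi>}"
            by (simp add: sec_def R_def j_def upd_axis)
        qed
        have "((\<lambda>s. f (?x + s *\<^sub>R axis (\<pi> k) 1)) has_real_derivative dir_deriv f k ?x) (at 0)"
          by (rule dd_lemma[OF pi k xR de _ _ U]) (use t in auto)
        then have "((\<lambda>s. phi (s + t)) has_real_derivative psi t) (at 0)"
          by (simp add: phi_def psi_def upd_axis j_def add.commute)
        then have "(phi has_real_derivative psi t) (at (0 + t))"
          by (simp only: DERIV_shift)
        then show ?thesis by (simp add: has_field_derivative_at_within)
      qed
      have psi_i: "psi absolutely_integrable_on sec" using elim(3) by (simp add: psi_def sec_def)
      note od = one_dim(2)[OF ab s1 s2 deriv psi_i, of c]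
      have "G1 y = integral sec (\<lambda>t. phi t * (b - 2*t + a))"
        using elim(1) unfolding sec_def[symmetric]
        by (auto intro!: integral_cong simp: phi_def wfun_def os os')
      moreover have "G2 y = integral sec (\<lambda>t. c*(b-t)*(t-a) * psi t)"
        using elim(2) unfolding sec_def[symmetric]
        by (auto intro!: integral_cong simp: psi_def h_weight_def os os' c_def)
      ultimately show ?thesis using od by simp
    qed
  qed
  interpret NNs: sigma_finite_measure "NN j" by (rule sigma_finite_NN)
  have "integral R (\<lambda>x. h_weight k x * dir_deriv f k x) = integral\<^sup>L (NN j) (\<lambda>y. - c * G1 y)"
  proof -
    have m1: "G2 \<in> borel_measurable (NN j)" using borel_measurable_integrable[OF G2(1)] .
    have m2: "(\<lambda>y. - c * G1 y) \<in> borel_measurable (NN j)" using borel_measurable_integrable[OF G1(1)] by measurable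
    show ?thesis using G2(2) integral_cong_AE[OF m1 m2 ae] by simp
  qed
  also have "\<dots> = - c * integral R (\<lambda>x. f x * wfun k x)" using G1(2) by simp
  finally show "integral (perm_region \<pi>) (\<lambda>x. h_weight k x * dir_deriv f k x)
       = - ((real CARD('n) + 1) * (real CARD('n) + 2)) * integral (perm_region \<pi>) (\<lambda>x. f x * wfun k x)"
    by (simp add: R_def c_def)
qed



lemma abs_le_sq: "\<bar>z::real\<bar> \<le> 1 + z\<^sup>2"
proof (cases "\<bar>z\<bar> \<le> 1")
  case True then show ?thesis by (simp add: add_increasing2)
next
  case False
  then have "\<bar>z\<bar> \<le> \<bar>z\<bar> * \<bar>z\<bar>" by (intro mult_le_cancel_left1[THEN iffD2]) auto
  then show ?thesis by (simp add: power2_eq_square abs_mult[symmetric])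
qed

lemma f_abs_int:
  fixes f :: "real^'n::finite \<Rightarrow> real"
  assumes "f measurable_on unit_cube" "(\<lambda>x. (f x)\<^sup>2) integrable_on unit_cube"
  shows "f absolutely_integrable_on unit_cube"
proof -
  have cl: "unit_cube \<in> sets lebesgue" by (simp add: unit_cube_def)
  show ?thesis
  proof (rule measurable_bounded_by_integrable_imp_absolutely_integrable[OF _ cl])
    show "f \<in> borel_measurable (lebesgue_on unit_cube)"
      using assms(1) measurable_on_iff_borel_measurable[OF cl] by blast
    have "(\<lambda>x. 1::real) integrable_on unit_cube" by (simp add: unit_cube_def integrable_const)
    then show "(\<lambda>x. 1 + (f x)\<^sup>2) integrable_on unit_cube" using assms(2) by (rule integrable_add)
    show "norm (f x) \<le> 1 + (f x)\<^sup>2" for x using abs_le_sq by simp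
  qed
qed

definition Pset :: "(nat \<Rightarrow> 'n::finite) set" where
  "Pset = {\<pi> \<in> perms. \<forall>m. m \<notin> {1..CARD('n)} \<longrightarrow> \<pi> m = undefined}"

lemma finite_Pset: "finite (Pset :: (nat \<Rightarrow> 'n::finite) set)"
proof -
  have "Pset \<subseteq> PiE {1..CARD('n)} (\<lambda>_. UNIV :: 'n set)"
    by (auto simp: Pset_def PiE_def extensional_def)
  moreover have "finite (PiE {1..CARD('n)} (\<lambda>_. UNIV :: 'n set))" by (intro finite_PiE) auto
  ultimately show ?thesis by (rule finite_subset)
qed

lemma union_Pset: "union_regions = (\<Union>\<pi>\<in>(Pset :: (nat \<Rightarrow> 'n::finite) set). perm_region \<pi>)"
proof
  show "(\<Union>\<pi>\<in>(Pset :: (nat \<Rightarrow> 'n::finite) set). perm_region \<pi>) \<subseteq> union_regions"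
    by (auto simp: union_regions_def Pset_def)
  show "union_regions \<subseteq> (\<Union>\<pi>\<in>(Pset :: (nat \<Rightarrow> 'n::finite) set). perm_region \<pi>)"
  proof
    fix x :: "real^'n" assume "x \<in> union_regions"
    then obtain \<sigma> where s: "\<sigma> \<in> perms" "x \<in> perm_region \<sigma>" by (auto simp: union_regions_def)
    define \<pi> where "\<pi> = restrict \<sigma> {1..CARD('n)}"
    have eq: "\<pi> m = \<sigma> m" if "m \<in> {1..CARD('n)}" for m using that by (simp add: \<pi>_def)
    have "bij_betw \<pi> {1..CARD('n)} (UNIV::'n set) = bij_betw \<sigma> {1..CARD('n)} UNIV"
      by (rule bij_betw_cong) (simp add: eq)
    then have "\<pi> \<in> perms" using s(1) unfolding perms_def by simp
    then have "\<pi> \<in> Pset" by (simp add: Pset_def \<pi>_def)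
    moreover have "perm_region \<pi> = perm_region \<sigma>" by (rule region_cong[OF eq])
    ultimately show "x \<in> (\<Union>\<pi>\<in>Pset. perm_region \<pi>)" using s(2) by blast
  qed
qed

lemma disjoint_Pset:
  assumes "\<pi> \<in> Pset" "\<sigma> \<in> Pset" "\<pi> \<noteq> (\<sigma> :: nat \<Rightarrow> 'n::finite)"
  shows "perm_region \<pi> \<inter> perm_region \<sigma> = {}"
proof (rule ccontr)
  assume "perm_region \<pi> \<inter> perm_region \<sigma> \<noteq> {}"
  then obtain x where x: "x \<in> perm_region \<pi>" "x \<in> perm_region \<sigma>" by auto
  have "\<pi> m = \<sigma> m" for m
  proof (cases "m \<in> {1..CARD('n)}")
    case True then show ?thesis using region_unique[of \<pi> \<sigma> x m] assms x by (auto simp: Pset_def)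
  next
    case False then show ?thesis using assms by (auto simp: Pset_def)
  qed
  then show False using assms(3) by auto
qed

lemma negligible_gap: "negligible (unit_cube - (union_regions :: (real^'n::finite) set))"
proof -
  let ?H = "(\<lambda>(i, i'). {x::real^'n. (axis i 1 - axis i' 1) \<bullet> x = 0}) ` {(i, i'). i \<noteq> (i'::'n)}"
  have sub: "unit_cube - union_regions \<subseteq> \<Union>?H"
  proof
    fix x :: "real^'n" assume x: "x \<in> unit_cube - union_regions"
    show "x \<in> \<Union>?H"
    proof (rule ccontr)
      assume "x \<notin> \<Union>?H"
      have "x $ i \<noteq> x $ i'" if ii: "i \<noteq> i'" for i i'
      proof
        assume eq: "x $ i = x $ i'"
        have "(axis i 1 - axis i' 1) \<bullet> x = x $ i - x $ i'"
          by (simp add: inner_diff_left inner_axis')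
        then have "x \<in> {x::real^'n. (axis i 1 - axis i' 1) \<bullet> x = 0}" using eq by simp
        moreover have "{x::real^'n. (axis i 1 - axis i' 1) \<bullet> x = 0} \<in> ?H"
          by (rule image_eqI[where x="(i,i')"]) (use ii in simp_all)
        ultimately have "x \<in> \<Union>?H" by (rule UnionI[rotated])
        then show False using \<open>x \<notin> \<Union>?H\<close> by blast
      qed
      moreover have xc: "x \<in> unit_cube" using x by simp
      ultimately obtain \<pi> where "\<pi> \<in> perms" "x \<in> perm_region \<pi>" using exists_region[of x] by blast
      then have "x \<in> union_regions" by (auto simp: union_regions_def)
      then show False using x by simp
    qed
  qed
  have neg: "negligible (\<Union>?H)"
  proof (rule negligible_Union)
    show "finite ?H" by (rule finite_imageI, rule finite_subset[of _ UNIV]) auto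
    fix T assume "T \<in> ?H"
    then obtain p where p: "p \<in> {(i, i'). i \<noteq> (i'::'n)}" "T = (\<lambda>(i, i'). {x::real^'n. (axis i 1 - axis i' 1) \<bullet> x = 0}) p"
      by (rule imageE)
    obtain i i' where pp: "p = (i, i')" by (cases p)
    have ii: "i \<noteq> i'" "T = {x::real^'n. (axis i 1 - axis i' 1) \<bullet> x = 0}" using p pp by simp_all
    have "axis i (1::real) - axis i' 1 \<noteq> 0"
    proof
      assume "axis i (1::real) - axis i' 1 = 0"
      then have "(axis i (1::real) - axis i' 1) $ i = 0" by simp
      then show False using ii(1) by (simp add: axis_def)
    qed
    then show "negligible T" using ii(2) negligible_hyperplane by blast
  qed
  show ?thesis by (rule negligible_subset[OF neg sub])
qed

lemma union_sub_cube: "union_regions \<subseteq> (unit_cube :: (real^'n::finite) set)"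
  by (auto simp: union_regions_def region_cube)

lemma has_integral_cube:
  fixes g :: "real^'n::finite \<Rightarrow> real"
  assumes "\<And>\<pi>. \<pi> \<in> Pset \<Longrightarrow> g integrable_on perm_region \<pi>"
  shows "(g has_integral (\<Sum>\<pi>\<in>Pset. integral (perm_region \<pi>) g)) unit_cube"
proof -
  have "(g has_integral (\<Sum>\<pi>\<in>Pset. integral (perm_region \<pi>) g)) (\<Union>\<pi>\<in>Pset. perm_region \<pi>)"
  proof (rule has_integral_UN[OF finite_Pset])
    show "(g has_integral integral (perm_region \<pi>) g) (perm_region \<pi>)" if "\<pi> \<in> Pset" for \<pi>
      using assms[OF that] by (simp add: integrable_integral)
    show "pairwise (\<lambda>i i'. negligible (perm_region i \<inter> perm_region i')) Pset"
      unfolding pairwise_def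
    proof (intro ballI impI)
      fix i i' assume "i \<in> Pset" "i' \<in> Pset" "i \<noteq> i'"
      then have "perm_region i \<inter> perm_region i' = {}" by (rule disjoint_Pset)
      then show "negligible (perm_region i \<inter> perm_region i')" by simp
    qed
  qed
  then have "(g has_integral (\<Sum>\<pi>\<in>Pset. integral (perm_region \<pi>) g)) union_regions"
    by (simp add: union_Pset)
  moreover have "negligible {x \<in> union_regions - unit_cube. g x \<noteq> 0}"
  proof -
    have "{x \<in> union_regions - unit_cube. g x \<noteq> 0} = {}" using union_sub_cube by blast
    then show ?thesis by (simp only: negligible_empty)
  qed
  moreover have "negligible {x \<in> unit_cube - union_regions. g x \<noteq> 0}"
    by (rule negligible_subset[OF negligible_gap]) auto
  ultimately show ?thesis using has_integral_spike_set_eq by blast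
qed

theorem proposition7:
  fixes f :: "real^'n::finite \<Rightarrow> real" and k :: nat
  assumes "1 \<le> k" and "k \<le> CARD('n)"
    and "f measurable_on unit_cube"
    and "(\<lambda>x. (f x)\<^sup>2) integrable_on unit_cube"
    and "dir_deriv_exists f k"
    and "continuous_on union_regions (dir_deriv f k)"
    and "dir_deriv f k absolutely_integrable_on union_regions"
  shows "influence f k = integral unit_cube (\<lambda>x. h_weight k x * dir_deriv f k x)"
proof -
  have fi: "f absolutely_integrable_on unit_cube" using f_abs_int assms(3,4) by blast
  note pr = per_region[OF _ assms(1,2) fi assms(5,7)]
  have P: "\<pi> \<in> perms" if "\<pi> \<in> Pset" for \<pi> using that by (simp add: Pset_def)
  have i1: "(\<lambda>x. f x * wfun k x) integrable_on perm_region \<pi>" if "\<pi> \<in> Pset" for \<pi>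
    using pr(1)[OF P[OF that]] set_lebesgue_integral_eq_integral(1) by blast
  have i2: "(\<lambda>x. h_weight k x * dir_deriv f k x) integrable_on perm_region \<pi>" if "\<pi> \<in> Pset" for \<pi>
    using pr(2)[OF P[OF that]] set_lebesgue_integral_eq_integral(1) by blast
  have I1: "integral unit_cube (\<lambda>x. f x * wfun k x) = (\<Sum>\<pi>\<in>Pset. integral (perm_region \<pi>) (\<lambda>x. f x * wfun k x))"
    using has_integral_cube[OF i1] by (rule integral_unique)
  have I2: "integral unit_cube (\<lambda>x. h_weight k x * dir_deriv f k x) = (\<Sum>\<pi>\<in>Pset. integral (perm_region \<pi>) (\<lambda>x. h_weight k x * dir_deriv f k x))"
    using has_integral_cube[OF i2] by (rule integral_unique)
  have "influence f k = - ((real CARD('n) + 1) * (real CARD('n) + 2)) * integral unit_cube (\<lambda>x. f x * wfun k x)"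
    unfolding influence_def wfun_def by (simp only: minus_mult_left)
  also have "\<dots> = (\<Sum>\<pi>\<in>Pset. - ((real CARD('n) + 1) * (real CARD('n) + 2)) * integral (perm_region \<pi>) (\<lambda>x. f x * wfun k x))"
    by (simp add: I1 sum_distrib_left)
  also have "\<dots> = (\<Sum>\<pi>\<in>Pset. integral (perm_region \<pi>) (\<lambda>x. h_weight k x * dir_deriv f k x))"
    using pr(3)[OF P] by (intro sum.cong) auto
  also have "\<dots> = integral unit_cube (\<lambda>x. h_weight k x * dir_deriv f k x)" by (simp add: I2)
  finally show ?thesis .
qed


end
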